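(* Let $k$ be an even positive integer and $\ell$ an odd positive integer. Let $GO_k(\ell)=\{g\in G_k(\ell): g\text{ odd}\}$ and $GE_k(\ell)=\{g\in G_k(\ell): g\text{ even}\}$. Then, as formal power series in $t$, \[ \sum_{c\ge0}\operatorname{re}_k(\ell,c)\frac{t^c}{c!}=\exp\Big(\sum_{g\in GO_k(\ell)}\frac{\ell^{g-1}}{g}t^g\Big)\cosh\Big(\sum_{g\in GE_k(\ell)}\frac{\ell^{g-1}}{g}t^g\Big), \] \[ \sum_{c\ge0}\operatorname{ro}_k(\ell,c)\frac{t^c}{c!}=\exp\Big(\sum_{g\in GO_k(\ell)}\frac{\ell^{g-1}}{g}t^g\Big)\sinh\Big(\sum_{g\in GE_k(\ell)}\frac{\ell^{g-1}}{g}t^g\Big). \] In particular, for $\ell=1$ (so that roots of the identity permutation are counted), \[ \sum_{c\ge0}\operatorname{re}_k(1,c)\frac{t^c}{c!}=\exp\Big(\sum_{g\mid k,\ g\text{ odd}}\frac{t^g}{g}\Big)\cosh\Big(\sum_{g\mid k,\ g\text{ even}}\frac{t^g}{g}\Big),\quad \sum_{c\ge0}\operatorname{ro}_k(1,c)\frac{t^c}{c!}=\exp\Big(\sum_{g\mid k,\ g\text{ odd}}\frac{t^g}{g}\Big)\sinh\Big(\sum_{g\mid k,\ g\text{ even}}\frac{t^g}{g}\Big). \]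
   Context: $G_k(\ell)=\{g\in\mathbb N:\gcd(g\ell,k)=g\}$. A permutation of cycle type $(\ell)^c$ is a permutation of an $\ell c$-element set whose disjoint cycle decomposition consists of exactly $c$ cycles, all of length $\ell$. $\operatorname{re}_k(\ell,c)$ (resp. $\operatorname{ro}_k(\ell,c)$) denotes the number of even (resp. odd) permutations $\tau$ of the same set with $\tau^k=\sigma$, for any fixed $\sigma$ of cycle type $(\ell)^c$; for $\ell=1$, $\sigma$ is the identity on $c$ points. *)

theory Defs
  imports "HOL-Computational_Algebra.Formal_Power_Series" "HOL-Combinatorics.Permutations" "HOL-Combinatorics.Orbits"
begin

definition Gset :: "nat \<Rightarrow> nat \<Rightarrow> nat set" where
  "Gset k l = {g. gcd (g * l) k = g}"
definition GOset :: "nat \<Rightarrow> nat \<Rightarrow> nat set" where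
  "GOset k l = {g \<in> Gset k l. odd g}"
definition GEset :: "nat \<Rightarrow> nat \<Rightarrow> nat set" where
  "GEset k l = {g \<in> Gset k l. even g}"

definition has_cycle_type :: "('a \<Rightarrow> 'a) \<Rightarrow> 'a set \<Rightarrow> nat \<Rightarrow> nat \<Rightarrow> bool" where
  "has_cycle_type \<sigma> S l c \<longleftrightarrow> finite S \<and> \<sigma> permutes S \<and> card S = l * c \<and>
     (\<forall>x\<in>S. card (orbit \<sigma> x) = l) \<and> card ((\<lambda>x. orbit \<sigma> x) ` S) = c"

definition re_roots :: "nat \<Rightarrow> ('a \<Rightarrow> 'a) \<Rightarrow> 'a set \<Rightarrow> nat" where
  "re_roots k \<sigma> S = card {\<tau>. \<tau> permutes S \<and> \<tau> ^^ k = \<sigma> \<and> evenperm \<tau>}"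
definition ro_roots :: "nat \<Rightarrow> ('a \<Rightarrow> 'a) \<Rightarrow> 'a set \<Rightarrow> nat" where
  "ro_roots k \<sigma> S = card {\<tau>. \<tau> permutes S \<and> \<tau> ^^ k = \<sigma> \<and> \<not> evenperm \<tau>}"

definition fps_cosh :: "'a::field_char_0 \<Rightarrow> 'a fps" where
  "fps_cosh c = Abs_fps (\<lambda>n. if even n then c ^ n / of_nat (fact n) else 0)"
definition fps_sinh :: "'a::field_char_0 \<Rightarrow> 'a fps" where
  "fps_sinh c = Abs_fps (\<lambda>n. if odd n then c ^ n / of_nat (fact n) else 0)"

definition egf :: "(nat \<Rightarrow> nat) \<Rightarrow> real fps" where
  "egf a = Abs_fps (\<lambda>c. real (a c) / fact c)"

end

theory Submission
  imports Defs "HOL-Algebra.Sym_Groups" "HOL-Number_Theory.Cong"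
begin


lemma perm_funpow_mod:
  assumes "permutation p"
  shows "(p ^^ i) a = (p ^^ (i mod least_power p a)) a"
proof -
  let ?L = "least_power p a"
  have "(p ^^ i) a = (p ^^ (i mod ?L)) ((p ^^ (i - i mod ?L)) a)"
    by (metis add_diff_inverse_nat funpow_add mod_less_eq_dividend not_le o_apply)
  also have "\<dots> = (p ^^ (i mod ?L)) a"
    using least_power_dvd[OF assms] by (metis dvd_minus_mod)
  finally show ?thesis .
qed

lemma perm_funpow_eq_iff:
  assumes "permutation p"
  shows "(p ^^ i) a = (p ^^ j) a \<longleftrightarrow> i mod least_power p a = j mod least_power p a"
proof
  let ?L = "least_power p a"
  have L: "?L > 0" using least_power_of_permutation(2)[OF assms] .
  assume "(p ^^ i) a = (p ^^ j) a"
  then have e: "(p ^^ (i mod ?L)) a = (p ^^ (j mod ?L)) a"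
    using perm_funpow_mod[OF assms] by metis
  have d: "distinct (support p a)" using cycle_of_permutation[OF assms] .
  have "\<forall>i'<?L. \<forall>j'<?L. i' \<noteq> j' \<longrightarrow> (p ^^ i') a \<noteq> (p ^^ j') a"
    using d by (simp add: distinct_conv_nth)
  then show "i mod ?L = j mod ?L" using e L by (meson mod_less_divisor)
next
  assume "i mod least_power p a = j mod least_power p a"
  then show "(p ^^ i) a = (p ^^ j) a" using perm_funpow_mod[OF assms] by metis
qed

lemma card_orbit_perm:
  assumes "permutation p"
  shows "card (orbit p a) = least_power p a"
proof -
  have "orbit p a = set (support p a)"
    using orbit_altdef_permutation[OF assms] support_set[OF assms] by auto
  then show ?thesis using cycle_of_permutation[OF assms] distinct_card by fastforce
qed

lemma funpow_commute_apply:
  assumes "\<And>x. f (g x) = g (f x)"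
  shows "(f ^^ n) ((g ^^ m) x) = (g ^^ m) ((f ^^ n) x)"
proof -
  have 1: "f ((g ^^ m) x) = (g ^^ m) (f x)" for x
    by (induction m) (auto simp: assms)
  show ?thesis by (induction n) (auto simp: 1)
qed

lemma funpow_inv_eq:
  assumes "\<And>x. x \<in> A \<Longrightarrow> f x \<in> A" "\<And>x. x \<in> A \<Longrightarrow> f x = g x" "x \<in> A"
  shows "(f ^^ n) x = (g ^^ n) x \<and> (f ^^ n) x \<in> A"
  using assms by (induction n) auto

definition rts :: "nat \<Rightarrow> ('a \<Rightarrow> 'a) \<Rightarrow> 'a set \<Rightarrow> ('a \<Rightarrow> 'a) set" where
  "rts k \<sigma> S = {\<tau>. \<tau> permutes S \<and> \<tau> ^^ k = \<sigma>}"

locale cyc =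
  fixes \<sigma> :: "'a \<Rightarrow> 'a" and S :: "'a set" and l :: nat
  assumes fin: "finite S" and perm: "\<sigma> permutes S"
    and orb: "\<And>x. x \<in> S \<Longrightarrow> card (orbit \<sigma> x) = l" and lpos: "l > 0"
begin

lemma permutation: "permutation \<sigma>"
  using fin perm permutation_permutes by blast

lemma lp: "x \<in> S \<Longrightarrow> least_power \<sigma> x = l"
  using orb card_orbit_perm[OF permutation] by metis

lemma pow_eq_iff: "x \<in> S \<Longrightarrow> (\<sigma> ^^ i) x = (\<sigma> ^^ j) x \<longleftrightarrow> i mod l = j mod l"
  using perm_funpow_eq_iff[OF permutation] lp by metis

lemma pow_l: "x \<in> S \<Longrightarrow> (\<sigma> ^^ l) x = x"
  using pow_eq_iff[of x l 0] by simp

lemma pow_in: "x \<in> S \<Longrightarrow> (\<sigma> ^^ i) x \<in> S"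
  using permutes_funpow[OF perm] permutes_in_image by metis

lemma in_S: "x \<in> S \<Longrightarrow> \<sigma> x \<in> S"
  using perm permutes_in_image by metis

lemma out_S: "x \<notin> S \<Longrightarrow> \<sigma> x = x"
  using perm permutes_not_in by metis

lemma orbit_range: "orbit \<sigma> x = range (\<lambda>i. (\<sigma> ^^ i) x)"
  using orbit_altdef_permutation[OF permutation] by auto

lemma in_orbit_iff: "y \<in> orbit \<sigma> x \<longleftrightarrow> (\<exists>i. y = (\<sigma> ^^ i) x)"
  using orbit_range by auto

lemma self_in_orbit: "x \<in> orbit \<sigma> x"
  using permutation_self_in_orbit[OF permutation] .

lemma orbit_sub: "x \<in> S \<Longrightarrow> orbit \<sigma> x \<subseteq> S"
  using pow_in orbit_range by auto

lemma orbit_eq: "y \<in> orbit \<sigma> x \<Longrightarrow> orbit \<sigma> y = orbit \<sigma> x"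
proof -
  assume y: "y \<in> orbit \<sigma> x"
  have x: "x \<in> orbit \<sigma> y" using orbit_swap[OF self_in_orbit y] .
  show ?thesis
  proof (rule equalityI; rule subsetI)
    fix z assume "z \<in> orbit \<sigma> y" then show "z \<in> orbit \<sigma> x" by (rule orbit_trans[OF _ y])
  next
    fix z assume "z \<in> orbit \<sigma> x" then show "z \<in> orbit \<sigma> y" by (rule orbit_trans[OF _ x])
  qed
qed

lemma orbit_eq_iff: "orbit \<sigma> y = orbit \<sigma> x \<longleftrightarrow> y \<in> orbit \<sigma> x"
proof
  assume "orbit \<sigma> y = orbit \<sigma> x" then show "y \<in> orbit \<sigma> x" using self_in_orbit[of y] by simp
qed (rule orbit_eq)

lemma pow_in_orbit: "(\<sigma> ^^ i) x \<in> orbit \<sigma> x"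
  unfolding in_orbit_iff by blast

lemma orbit_pow: "orbit \<sigma> ((\<sigma> ^^ i) x) = orbit \<sigma> x"
  using orbit_eq[OF pow_in_orbit] .

definition inv_set :: "'a set \<Rightarrow> bool" where
  "inv_set A \<longleftrightarrow> A \<subseteq> S \<and> (\<forall>x\<in>A. \<sigma> x \<in> A)"

lemma inv_set_pow: "inv_set A \<Longrightarrow> x \<in> A \<Longrightarrow> (\<sigma> ^^ i) x \<in> A"
  unfolding inv_set_def by (induction i) auto

lemma inv_set_orbit: "inv_set A \<Longrightarrow> x \<in> A \<Longrightarrow> orbit \<sigma> x \<subseteq> A"
  using inv_set_pow orbit_range by auto

lemma card_inv_set:
  assumes "inv_set A"
  shows "card A = l * card (orbit \<sigma> ` A)"
proof -
  have A: "A = \<Union> (orbit \<sigma> ` A)"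
    using inv_set_orbit[OF assms] self_in_orbit by blast
  have fA: "finite A" using assms fin unfolding inv_set_def using finite_subset by blast
  have dis: "disjoint (orbit \<sigma> ` A)"
  proof (rule disjointI)
    fix a b assume "a \<in> orbit \<sigma> ` A" "b \<in> orbit \<sigma> ` A" "a \<noteq> b"
    then obtain x y where "a = orbit \<sigma> x" "b = orbit \<sigma> y" by blast
    with \<open>a \<noteq> b\<close> show "a \<inter> b = {}" using orbit_eq by blast
  qed
  have "card A = card (\<Union> (orbit \<sigma> ` A))" using A by simp
  also have "\<dots> = sum card (orbit \<sigma> ` A)"
  proof (rule card_Union_disjoint[OF dis])
    fix B assume "B \<in> orbit \<sigma> ` A"
    then obtain x where "x \<in> A" "B = orbit \<sigma> x" by blast
    then show "finite B" using inv_set_orbit[OF assms] fA finite_subset by metis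
  qed
  also have "\<dots> = sum (\<lambda>_. l) (orbit \<sigma> ` A)"
  proof (rule sum.cong)
    fix B assume "B \<in> orbit \<sigma> ` A"
    then obtain x where "x \<in> A" "B = orbit \<sigma> x" by blast
    then show "card B = l" using orb assms unfolding inv_set_def by blast
  qed simp
  finally show ?thesis by simp
qed

lemma inv_set_S: "inv_set S"
  unfolding inv_set_def using in_S by auto

end


lemma Gset_iff:
  assumes "k > 0"
  shows "g \<in> Gset k l \<longleftrightarrow> g > 0 \<and> g dvd k \<and> coprime (k div g) l"
proof
  assume g: "g \<in> Gset k l"
  then have e: "gcd (g * l) k = g" by (simp add: Gset_def)
  have "g > 0"
  proof (rule ccontr)
    assume "\<not> g > 0" then have "g = 0" by simp
    with e assms show False by simp
  qed
  moreover have "g dvd k" using e by (metis gcd_dvd2)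
  moreover {
    then obtain k' where k: "k = g * k'" by blast
    have "g * gcd l k' = g" using e k gcd_mult_distrib_nat by metis
    then have "gcd l k' = 1" using \<open>g > 0\<close> by simp
    then have "gcd k' l = 1" by (simp add: gcd.commute)
    moreover have "k div g = k'" using k \<open>g > 0\<close> by simp
    ultimately have "coprime (k div g) l" by (simp add: coprime_iff_gcd_eq_1)
  }
  ultimately show "g > 0 \<and> g dvd k \<and> coprime (k div g) l" by blast
next
  assume h: "g > 0 \<and> g dvd k \<and> coprime (k div g) l"
  then obtain k' where k: "k = g * k'" by blast
  have "k div g = k'" using k h by simp
  then have "coprime k' l" using h by simp
  then have "gcd l k' = 1" by (simp add: coprime_iff_gcd_eq_1 gcd.commute)
  then have "gcd (g * l) k = g" using k gcd_mult_distrib_nat by (metis mult.right_neutral)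
  then show "g \<in> Gset k l" by (simp add: Gset_def)
qed

lemma Gset_sub: "k > 0 \<Longrightarrow> Gset k l \<subseteq> {1..k}"
  using Gset_iff by (auto intro: dvd_imp_le)

lemma Gset_finite: "k > 0 \<Longrightarrow> finite (Gset k l)"
  using Gset_sub finite_subset by blast

context cyc
begin

lemma inv_set_back:
  assumes "inv_set A" "x \<in> S" "\<sigma> x \<in> A" shows "x \<in> A"
proof -
  have "x = (\<sigma> ^^ l) x" using pow_l assms(2) by simp
  also have "\<dots> = (\<sigma> ^^ (l - 1)) (\<sigma> x)"
    using lpos by (metis Suc_diff_1 funpow_Suc_right o_apply)
  finally have eq: "x = (\<sigma> ^^ (l - 1)) (\<sigma> x)" .
  show ?thesis by (subst eq) (rule inv_set_pow[OF assms(1,3)])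
qed

lemma inv_set_compl: "inv_set A \<Longrightarrow> inv_set (S - A)"
  using inv_set_back in_S unfolding inv_set_def by blast

lemma inv_set_restrict_permutes:
  assumes "inv_set A"
  shows "(\<lambda>x. if x \<in> A then \<sigma> x else x) permutes A"
proof (rule bij_imp_permutes)
  let ?r = "(\<lambda>x. if x \<in> A then \<sigma> x else x)"
  show "bij_betw ?r A A"
    unfolding bij_betw_def
  proof
    show "inj_on ?r A"
    proof (rule inj_onI)
      fix x y assume "x \<in> A" "y \<in> A" "?r x = ?r y"
      then have "\<sigma> x = \<sigma> y" by simp
      then show "x = y" using permutes_inj[OF perm] by (meson injD)
    qed
    show "?r ` A = A"
    proof
      show "?r ` A \<subseteq> A" using assms unfolding inv_set_def by auto
      show "A \<subseteq> ?r ` A"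
      proof
        fix y assume y: "y \<in> A"
        have yS: "y \<in> S" using y assms inv_set_def by auto
        have "y = \<sigma> ((\<sigma> ^^ (l - 1)) y)"
          using pow_l[OF yS] lpos by (metis Suc_diff_1 funpow.simps(2) o_apply)
        moreover have "(\<sigma> ^^ (l - 1)) y \<in> A" using inv_set_pow[OF assms y] .
        ultimately show "y \<in> ?r ` A" by force
      qed
    qed
  qed
qed auto

lemma restrict_cycle_type:
  assumes "inv_set A" "card S = l * c" "card A = l * a"
  shows "has_cycle_type (\<lambda>x. if x \<in> S - A then \<sigma> x else x) (S - A) l (c - a)"
proof -
  let ?r = "(\<lambda>x. if x \<in> S - A then \<sigma> x else x)"
  have B: "inv_set (S - A)" using inv_set_compl[OF assms(1)] .
  have AS: "A \<subseteq> S" using assms(1) inv_set_def by auto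
  have fA: "finite A" using AS fin finite_subset by blast
  have pr: "?r permutes (S - A)" using inv_set_restrict_permutes[OF B] .
  have orbeq: "orbit ?r x = orbit \<sigma> x" if "x \<in> S - A" for x
    by (rule orbit_cong0[OF that]) (use B inv_set_def in auto)
  have cB: "card (S - A) = l * (c - a)"
    using card_Diff_subset[OF fA AS] assms(2,3) by (simp add: diff_mult_distrib2)
  have "card (S - A) = l * card (orbit \<sigma> ` (S - A))" using card_inv_set[OF B] .
  then have co: "card (orbit \<sigma> ` (S - A)) = c - a" using cB lpos by simp
  have "orbit ?r ` (S - A) = orbit \<sigma> ` (S - A)" using orbeq by (rule image_cong[OF refl])
  then show ?thesis
    unfolding has_cycle_type_def using fin pr cB orbeq orb co by auto
qed

end

definition Ycnt :: "nat \<Rightarrow> nat \<Rightarrow> nat \<Rightarrow> nat" where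
  "Ycnt l c n = l ^ n * (\<Prod>i<n. (c - 1 - i))"

locale rec = cyc +
  fixes k :: nat and x0 :: 'a
  assumes kpos: "k > 0" and x0: "x0 \<in> S" and lodd: "odd l"
begin

abbreviation "C0 \<equiv> orbit \<sigma> x0"

definition gof :: "('a \<Rightarrow> 'a) \<Rightarrow> nat" where
  "gof \<tau> = (LEAST n. 0 < n \<and> (\<tau> ^^ n) x0 \<in> C0)"

definition ysof :: "('a \<Rightarrow> 'a) \<Rightarrow> 'a list" where
  "ysof \<tau> = map (\<lambda>i. (\<tau> ^^ i) x0) [1..<gof \<tau>]"

definition Ylists :: "nat \<Rightarrow> 'a list set" where
  "Ylists n = {ys. length ys = n \<and> set ys \<subseteq> S - C0 \<and> distinct (map (orbit \<sigma>) ys)}"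

definition m0 :: "nat \<Rightarrow> nat" where
  "m0 g = (SOME m. [k div g * m = Suc 0] (mod l))"

definition F :: "'a list \<Rightarrow> nat \<Rightarrow> 'a" where
  "F ys n = (\<sigma> ^^ ((n div Suc (length ys)) * m0 (Suc (length ys)))) ((x0 # ys) ! (n mod Suc (length ys)))"

definition zs :: "'a list \<Rightarrow> 'a list" where
  "zs ys = map (F ys) [0..<Suc (length ys) * l]"

definition cy :: "'a list \<Rightarrow> 'a \<Rightarrow> 'a" where
  "cy ys = cycle_of_list (zs ys)"

definition rS :: "'a list \<Rightarrow> 'a set" where
  "rS ys = S - set (zs ys)"

definition r\<sigma> :: "'a list \<Rightarrow> 'a \<Rightarrow> 'a" where
  "r\<sigma> ys = (\<lambda>x. if x \<in> rS ys then \<sigma> x else x)"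

definition good :: "'a list \<Rightarrow> bool" where
  "good ys \<longleftrightarrow> ys \<in> Ylists (length ys) \<and> Suc (length ys) \<in> Gset k l"

lemma C0_back: "(\<sigma> ^^ j) z \<in> C0 \<Longrightarrow> z \<in> C0"
  using orbit_pow orbit_eq_iff by metis

lemma x0_C0: "x0 \<in> C0" using self_in_orbit .

context
  fixes ys assumes good: "good ys"
begin

lemma g_dvd: "Suc (length ys) dvd k" and g_cop: "coprime (k div Suc (length ys)) l"
  using good Gset_iff[OF kpos] unfolding good_def by auto

lemma ys_Y: "length ys = length ys" "set ys \<subseteq> S - C0" "distinct (map (orbit \<sigma>) ys)"
  using good unfolding good_def Ylists_def by auto

lemma m0_prop: "(k div Suc (length ys) * m0 (Suc (length ys))) mod l = Suc 0 mod l"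
proof -
  have "\<exists>m. [k div Suc (length ys) * m = Suc 0] (mod l)"
    using g_cop coprime_iff_invertible_nat by blast
  then have "[k div Suc (length ys) * m0 (Suc (length ys)) = Suc 0] (mod l)"
    unfolding m0_def by (rule someI_ex)
  then show ?thesis by (simp add: cong_def)
qed

lemma m0_cop: "coprime (m0 (Suc (length ys))) l"
  using m0_prop coprime_iff_invertible_nat unfolding cong_def by (metis mult.commute)

lemma yl_in: "r < Suc (length ys) \<Longrightarrow> (x0 # ys) ! r \<in> S"
  using ys_Y(2) x0 nth_mem by (cases r) fastforce+

lemma yl_distinct: "distinct (map (orbit \<sigma>) (x0 # ys))"
proof -
  have "C0 \<notin> orbit \<sigma> ` set ys"
  proof
    assume "C0 \<in> orbit \<sigma> ` set ys"
    then obtain y where "y \<in> set ys" "orbit \<sigma> y = C0" by auto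
    then have "y \<in> C0" using orbit_eq_iff by blast
    with \<open>y \<in> set ys\<close> ys_Y(2) show False by auto
  qed
  then show ?thesis using ys_Y(3) by simp
qed

lemma yl_orbit_inj:
  assumes "r1 < Suc (length ys)" "r2 < Suc (length ys)"
    "orbit \<sigma> ((x0 # ys) ! r1) = orbit \<sigma> ((x0 # ys) ! r2)"
  shows "r1 = r2"
proof -
  have l1: "r1 < length (map (orbit \<sigma>) (x0 # ys))" and l2: "r2 < length (map (orbit \<sigma>) (x0 # ys))"
    using assms by simp_all
  have "map (orbit \<sigma>) (x0 # ys) ! r1 = map (orbit \<sigma>) (x0 # ys) ! r2"
  proof -
    have l1': "r1 < length (x0 # ys)" and l2': "r2 < length (x0 # ys)" using assms by simp_all
    show ?thesis using assms(3) nth_map[OF l1'] nth_map[OF l2'] by metis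
  qed
  then show ?thesis using nth_eq_iff_index_eq[OF yl_distinct l1 l2] by blast
qed

lemma F_in: "F ys n \<in> S"
  unfolding F_def by (rule pow_in, rule yl_in) simp

lemma F_orbit: "orbit \<sigma> (F ys n) = orbit \<sigma> ((x0 # ys) ! (n mod Suc (length ys)))"
  unfolding F_def by (rule orbit_pow)

lemma F_small: "n < Suc (length ys) \<Longrightarrow> F ys n = (x0 # ys) ! n"
  unfolding F_def by simp

lemma F_mod: "F ys (n mod (Suc (length ys) * l)) = F ys n"
proof -
  let ?G = "Suc (length ys)"
  let ?q = "n div ?G" and ?r = "n mod ?G"
  have e: "n mod (?G * l) = ?G * (?q mod l) + ?r" by (rule mod_mult2_eq)
  have r: "?r < ?G" by simp
  have d: "(?G * (?q mod l) + ?r) div ?G = ?q mod l"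
    using r by (metis add.commute div_mult_self2 div_less mult.commute add_0 nat.distinct(1))
  have m: "(?G * (?q mod l) + ?r) mod ?G = ?r"
    using r by (metis add.commute mod_mult_self2 mod_less mult.commute)
  have "((?q mod l) * m0 ?G) mod l = (?q * m0 ?G) mod l" by (simp add: mod_mult_left_eq)
  then show ?thesis
    unfolding F_def e d m using pow_eq_iff[OF yl_in[OF r]] by simp
qed

lemma F_k: "F ys (n + k) = \<sigma> (F ys n)"
proof -
  let ?G = "Suc (length ys)"
  obtain k' where k: "k = ?G * k'" using g_dvd by blast
  have kd: "k div ?G = k'" by (metis k nonzero_mult_div_cancel_left Zero_not_Suc)
  let ?q = "n div ?G" and ?r = "n mod ?G"
  let ?y = "(x0 # ys) ! ?r"
  have yS: "?y \<in> S" by (rule yl_in) simp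
  have d: "(n + k) div ?G = ?q + k'" by (metis k div_mult_self2 add.commute Zero_not_Suc)
  have m: "(n + k) mod ?G = ?r" by (metis k mod_mult_self2)
  have "F ys (n + k) = (\<sigma> ^^ ((?q + k') * m0 ?G)) ?y"
    by (simp only: F_def d m)
  also have "\<dots> = (\<sigma> ^^ (k' * m0 ?G)) ((\<sigma> ^^ (?q * m0 ?G)) ?y)"
    by (simp add: add_mult_distrib funpow_add add.commute)
  also have "\<dots> = (\<sigma> ^^ 1) ((\<sigma> ^^ (?q * m0 ?G)) ?y)"
  proof -
    have h: "(k' * m0 ?G) mod l = 1 mod l" using m0_prop kd by simp
    have eqv: "(\<sigma> ^^ (k' * m0 ?G)) ((\<sigma> ^^ (?q * m0 ?G)) ?y) = (\<sigma> ^^ 1) ((\<sigma> ^^ (?q * m0 ?G)) ?y)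
        \<longleftrightarrow> (k' * m0 ?G) mod l = 1 mod l"
      by (rule pow_eq_iff[OF pow_in[OF yS]])
    show ?thesis using eqv h by blast
  qed
  also have "\<dots> = \<sigma> (F ys n)" unfolding F_def by simp
  finally show ?thesis .
qed

lemma zs_len: "length (zs ys) = Suc (length ys) * l"
  unfolding zs_def by simp

lemma zs_nth: "i < Suc (length ys) * l \<Longrightarrow> zs ys ! i = F ys i"
  unfolding zs_def by simp

lemma Gl_pos: "Suc (length ys) * l > 0" using lpos by simp

lemma set_zs: "set (zs ys) = range (F ys)"
proof
  show "set (zs ys) \<subseteq> range (F ys)" unfolding zs_def by auto
  show "range (F ys) \<subseteq> set (zs ys)"
  proof
    fix x assume "x \<in> range (F ys)"
    then obtain n where x: "x = F ys n" by blast
    then have "x = F ys (n mod (Suc (length ys) * l))" using F_mod by simp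
    then show "x \<in> set (zs ys)" unfolding zs_def using Gl_pos by auto
  qed
qed

lemma zs_distinct: "distinct (zs ys)"
proof -
  let ?G = "Suc (length ys)"
  have "inj_on (F ys) {0..<?G * l}"
  proof (rule inj_onI)
    fix a b assume a: "a \<in> {0..<?G * l}" and b: "b \<in> {0..<?G * l}" and e: "F ys a = F ys b"
    have "orbit \<sigma> ((x0 # ys) ! (a mod ?G)) = orbit \<sigma> ((x0 # ys) ! (b mod ?G))"
      using F_orbit e by metis
    then have r: "a mod ?G = b mod ?G" using yl_orbit_inj[of "a mod ?G" "b mod ?G"] by simp
    let ?y = "(x0 # ys) ! (a mod ?G)"
    have yS: "?y \<in> S" by (rule yl_in) simp
    have "(\<sigma> ^^ ((a div ?G) * m0 ?G)) ?y = (\<sigma> ^^ ((b div ?G) * m0 ?G)) ?y"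
      using e r unfolding F_def by simp
    then have "[(a div ?G) * m0 ?G = (b div ?G) * m0 ?G] (mod l)"
      using pow_eq_iff[OF yS] by (simp add: cong_def)
    then have "[a div ?G = b div ?G] (mod l)" using cong_mult_rcancel_nat[OF m0_cop] by blast
    moreover have "a div ?G < l" "b div ?G < l"
      using a b by (auto intro!: less_mult_imp_div_less simp: mult.commute)
    ultimately have "a div ?G = b div ?G" by (simp add: cong_def)
    with r show "a = b" by (metis div_mult_mod_eq)
  qed
  then show ?thesis unfolding zs_def by (simp add: distinct_map)
qed

lemma zs_sub: "set (zs ys) \<subseteq> S" using set_zs F_in by auto

lemma zs_inv: "inv_set (set (zs ys))"
  unfolding inv_set_def using zs_sub set_zs F_k by (auto simp del: F_k) (metis F_k rangeI)

lemma card_zs: "card (set (zs ys)) = l * Suc (length ys)"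
  using distinct_card[OF zs_distinct] zs_len by simp

lemma g_le_c: "card S = l * c \<Longrightarrow> Suc (length ys) \<le> c"
proof -
  assume "card S = l * c"
  moreover have "card (set (zs ys)) \<le> card S" using card_mono[OF fin zs_sub] .
  ultimately have h: "l * Suc (length ys) \<le> l * c" using card_zs by simp
  show ?thesis using lpos mult_le_cancel1[of l "Suc (length ys)" c] h by blast
qed

lemma cy_permutes: "cy ys permutes set (zs ys)"
  unfolding cy_def by (rule cycle_permutes)

lemma cy_pow: "(cy ys ^^ n) (F ys i) = F ys (i + n)"
proof -
  let ?L = "Suc (length ys) * l"
  let ?i = "i mod ?L"
  have i: "?i < ?L" using Gl_pos by simp
  have "(cy ys ^^ n) (F ys i) = (cy ys ^^ n) (zs ys ! ?i)" using F_mod zs_nth[OF i] by simp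
  also have "\<dots> = map (cy ys ^^ n) (zs ys) ! ?i" using i zs_len by simp
  also have "\<dots> = rotate n (zs ys) ! ?i"
    unfolding cy_def using cyclic_rotation[OF zs_distinct] by simp
  also have "\<dots> = zs ys ! ((n + ?i) mod ?L)" using nth_rotate[of ?i "zs ys" n] i unfolding zs_len by simp
  also have "\<dots> = F ys ((n + ?i) mod ?L)" using zs_nth Gl_pos by simp
  also have "\<dots> = F ys (i + n)" using F_mod by (metis add.commute mod_add_right_eq)
  finally show ?thesis .
qed

lemma cy_evenperm: "evenperm (cy ys) \<longleftrightarrow> odd (Suc (length ys))"
proof -
  have "swapidseq_ext (set (zs ys)) (length (zs ys) - 1) (cy ys)"
    unfolding cy_def by (rule swapidseq_ext_of_cycles[OF zs_distinct])
  then have "evenperm (cy ys) = even (length (zs ys) - 1)"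
    using swapidseq_ext_imp_swapidseq evenperm_unique by blast
  also have "\<dots> \<longleftrightarrow> odd (Suc (length ys))"
    using lodd lpos zs_len by (auto simp: even_diff_iff)
  finally show ?thesis .
qed

lemma rS_type:
  assumes "card S = l * c"
  shows "has_cycle_type (r\<sigma> ys) (rS ys) l (c - Suc (length ys))"
  using restrict_cycle_type[OF zs_inv assms card_zs] unfolding r\<sigma>_def rS_def .

end

end


context rec
begin

context
  fixes \<tau> assumes R: "\<tau> \<in> rts k \<sigma> S"
begin

lemma tp: "\<tau> permutes S" and tk: "\<tau> ^^ k = \<sigma>" using R by (auto simp: rts_def)

lemma tperm: "permutation \<tau>" using tp fin permutation_permutes by blast

lemma t_in: "x \<in> S \<Longrightarrow> (\<tau> ^^ n) x \<in> S"
  using permutes_funpow[OF tp] permutes_in_image by metis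

lemma t_comm1: "\<tau> (\<sigma> x) = \<sigma> (\<tau> x)"
  by (metis funpow_swap1 tk)

lemma t_comm: "(\<tau> ^^ n) ((\<sigma> ^^ j) x) = (\<sigma> ^^ j) ((\<tau> ^^ n) x)"
  by (rule funpow_commute_apply) (rule t_comm1)

lemma t_inj: "inj (\<tau> ^^ n)" using inj_fn permutes_inj[OF tp] by blast

lemma t_ex: "0 < k \<and> (\<tau> ^^ k) x0 \<in> C0"
  using kpos tk pow_in_orbit[of 1 x0] by simp

lemma t_ex': "\<exists>n. 0 < n \<and> (\<tau> ^^ n) x0 \<in> C0" using t_ex by blast

lemma gof_props: "0 < gof \<tau>" "(\<tau> ^^ gof \<tau>) x0 \<in> C0" "gof \<tau> \<le> k"
  using LeastI_ex[OF t_ex'] Least_le[of "\<lambda>n. 0 < n \<and> (\<tau> ^^ n) x0 \<in> C0" k, OF t_ex]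
  unfolding gof_def by auto

lemma gof_min: "0 < n \<Longrightarrow> n < gof \<tau> \<Longrightarrow> (\<tau> ^^ n) x0 \<notin> C0"
  using not_less_Least[of n "\<lambda>n. 0 < n \<and> (\<tau> ^^ n) x0 \<in> C0"] unfolding gof_def by blast

lemma t_qg:
  assumes "(\<tau> ^^ g) x0 = (\<sigma> ^^ m) x0"
  shows "(\<tau> ^^ (q * g)) x0 = (\<sigma> ^^ (q * m)) x0"
proof (induction q)
  case 0 then show ?case by simp
next
  case (Suc q)
  have "(\<tau> ^^ (Suc q * g)) x0 = (\<tau> ^^ g) ((\<tau> ^^ (q * g)) x0)" by (simp add: funpow_add)
  also have "\<dots> = (\<tau> ^^ g) ((\<sigma> ^^ (q * m)) x0)" using Suc by simp
  also have "\<dots> = (\<sigma> ^^ (q * m)) ((\<tau> ^^ g) x0)" by (rule t_comm)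
  also have "\<dots> = (\<sigma> ^^ (q * m + m)) x0" using assms by (simp add: funpow_add)
  also have "\<dots> = (\<sigma> ^^ (Suc q * m)) x0" by (simp add: add.commute)
  finally show ?case .
qed

lemma g_dvd_k: "gof \<tau> dvd k"
proof -
  let ?g = "gof \<tau>"
  obtain m where m: "(\<tau> ^^ ?g) x0 = (\<sigma> ^^ m) x0" using gof_props(2) in_orbit_iff by blast
  let ?q = "k div ?g" and ?r = "k mod ?g"
  have "(\<tau> ^^ ?r) ((\<tau> ^^ (?q * ?g)) x0) = (\<tau> ^^ (?r + ?q * ?g)) x0" by (simp only: funpow_add o_apply)
  also have "?r + ?q * ?g = k" by (rule mod_div_mult_eq)
  finally have e: "(\<tau> ^^ ?r) ((\<sigma> ^^ (?q * m)) x0) = (\<tau> ^^ k) x0" using t_qg[OF m] by simp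
  have "(\<sigma> ^^ (?q * m)) ((\<tau> ^^ ?r) x0) \<in> C0" using e t_comm t_ex by metis
  then have r: "(\<tau> ^^ ?r) x0 \<in> C0" by (rule C0_back)
  have "?r = 0"
  proof (rule ccontr)
    assume "?r \<noteq> 0"
    then have "0 < ?r" "?r < ?g" using gof_props(1) by simp_all
    with gof_min r show False by blast
  qed
  then show ?thesis by (simp add: dvd_eq_mod_eq_0)
qed

lemma gof_G_m0: "gof \<tau> \<in> Gset k l \<and> (\<tau> ^^ gof \<tau>) x0 = (\<sigma> ^^ m0 (gof \<tau>)) x0"
proof -
  let ?g = "gof \<tau>"
  obtain m where m: "(\<tau> ^^ ?g) x0 = (\<sigma> ^^ m) x0" using gof_props(2) in_orbit_iff by blast
  let ?q = "k div ?g"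
  have k: "?q * ?g = k" using g_dvd_k by simp
  have e1: "(\<sigma> ^^ (?q * m)) x0 = (\<sigma> ^^ 1) x0" using t_qg[OF m, of ?q] k tk by simp
  have "(?q * m) mod l = 1 mod l" using pow_eq_iff[OF x0, of "?q * m" 1] e1 by blast
  then have c1: "[?q * m = Suc 0] (mod l)" by (simp add: cong_def)
  then have cop: "coprime ?q l" using coprime_iff_invertible_nat by blast
  then have G: "?g \<in> Gset k l" using Gset_iff[OF kpos] g_dvd_k gof_props(1) by blast
  have "\<exists>m. [?q * m = Suc 0] (mod l)" using c1 by blast
  then have c2: "[?q * m0 ?g = Suc 0] (mod l)" unfolding m0_def by (rule someI_ex)
  have "[?q * m = ?q * m0 ?g] (mod l)" using c1 c2 cong_sym cong_trans by blast
  then have "[m = m0 ?g] (mod l)" using cong_mult_lcancel_nat[OF cop] by blast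
  then have "(\<sigma> ^^ m) x0 = (\<sigma> ^^ m0 ?g) x0" using pow_eq_iff[OF x0] by (simp add: cong_def)
  with G m show ?thesis by simp
qed

lemma orbit_distinct:
  assumes a: "0 < a" "a < b" "b < gof \<tau>"
  shows "orbit \<sigma> ((\<tau> ^^ a) x0) \<noteq> orbit \<sigma> ((\<tau> ^^ b) x0)"
proof
  assume e: "orbit \<sigma> ((\<tau> ^^ a) x0) = orbit \<sigma> ((\<tau> ^^ b) x0)"
  then have "(\<tau> ^^ b) x0 \<in> orbit \<sigma> ((\<tau> ^^ a) x0)" using orbit_eq_iff by metis
  then obtain j where j: "(\<tau> ^^ b) x0 = (\<sigma> ^^ j) ((\<tau> ^^ a) x0)" using in_orbit_iff by blast
  have "(\<tau> ^^ a) ((\<tau> ^^ (b - a)) x0) = (\<tau> ^^ (a + (b - a))) x0" by (simp add: funpow_add)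
  also have "\<dots> = (\<tau> ^^ b) x0" using a by simp
  also have "\<dots> = (\<tau> ^^ a) ((\<sigma> ^^ j) x0)" using j t_comm by metis
  finally have "(\<tau> ^^ (b - a)) x0 = (\<sigma> ^^ j) x0" using t_inj[of a] by (simp add: inj_eq)
  then have "(\<tau> ^^ (b - a)) x0 \<in> C0" using pow_in_orbit by simp
  moreover have "0 < b - a" "b - a < gof \<tau>" using a by auto
  ultimately show False using gof_min by blast
qed

lemma ysof_Y: "ysof \<tau> \<in> Ylists (gof \<tau> - 1)"
proof -
  have len: "length (ysof \<tau>) = gof \<tau> - 1" unfolding ysof_def by simp
  have sub: "set (ysof \<tau>) \<subseteq> S - C0"
    unfolding ysof_def using t_in[OF x0] gof_min by auto
  have "inj_on (\<lambda>i. orbit \<sigma> ((\<tau> ^^ i) x0)) {1..<gof \<tau>}"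
  proof (rule inj_onI)
    fix a b assume a: "a \<in> {1..<gof \<tau>}" and b: "b \<in> {1..<gof \<tau>}"
      and e: "orbit \<sigma> ((\<tau> ^^ a) x0) = orbit \<sigma> ((\<tau> ^^ b) x0)"
    show "a = b"
    proof (rule ccontr)
      assume "a \<noteq> b"
      then have "a < b \<or> b < a" by arith
      then show False using orbit_distinct a b e by (metis atLeastLessThan_iff less_le_trans zero_less_one)
    qed
  qed
  then have "distinct (map (orbit \<sigma>) (ysof \<tau>))"
    unfolding ysof_def by (simp add: distinct_map o_def)
  with len sub show ?thesis unfolding Ylists_def by blast
qed

lemma len_ysof: "Suc (length (ysof \<tau>)) = gof \<tau>"
  using gof_props(1) unfolding ysof_def by simp

lemma good_ysof: "good (ysof \<tau>)"
  unfolding good_def using ysof_Y len_ysof gof_G_m0 by (metis diff_Suc_1)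

lemma t_small: "r < gof \<tau> \<Longrightarrow> (\<tau> ^^ r) x0 = (x0 # ysof \<tau>) ! r"
  unfolding ysof_def by (cases r) (auto simp: nth_map nth_upt)

lemma t_F: "(\<tau> ^^ n) x0 = F (ysof \<tau>) n"
proof -
  let ?ys = "ysof \<tau>" let ?g = "gof \<tau>"
  have G: "Suc (length ?ys) = ?g" by (rule len_ysof)
  let ?q = "n div ?g" and ?r = "n mod ?g"
  have r: "?r < ?g" using gof_props(1) by simp
  have "(\<tau> ^^ n) x0 = (\<tau> ^^ (?r + ?q * ?g)) x0" by (simp only: mod_div_mult_eq)
  also have "\<dots> = (\<tau> ^^ ?r) ((\<tau> ^^ (?q * ?g)) x0)" by (simp only: funpow_add o_apply)
  also have "\<dots> = (\<tau> ^^ ?r) ((\<sigma> ^^ (?q * m0 ?g)) x0)" using t_qg gof_G_m0 by metis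
  also have "\<dots> = (\<sigma> ^^ (?q * m0 ?g)) ((\<tau> ^^ ?r) x0)" by (rule t_comm)
  also have "\<dots> = (\<sigma> ^^ (?q * m0 ?g)) ((x0 # ?ys) ! ?r)" using t_small[OF r] by simp
  also have "\<dots> = F ?ys n" unfolding F_def G ..
  finally show ?thesis .
qed

lemma zs_range: "set (zs (ysof \<tau>)) = range (\<lambda>n. (\<tau> ^^ n) x0)"
  using set_zs[OF good_ysof] t_F by simp

lemma zs_tau: "x \<in> set (zs (ysof \<tau>)) \<Longrightarrow> \<tau> x \<in> set (zs (ysof \<tau>))"
proof -
  assume "x \<in> set (zs (ysof \<tau>))"
  then obtain n where "x = (\<tau> ^^ n) x0" using zs_range by auto
  then have "\<tau> x = (\<tau> ^^ Suc n) x0" by simp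
  then show ?thesis unfolding zs_range by (metis (mono_tags) range_eqI)
qed

lemma zs_tau_back:
  assumes xS: "x \<in> S" and tx: "\<tau> x \<in> set (zs (ysof \<tau>))"
  shows "x \<in> set (zs (ysof \<tau>))"
proof -
  let ?ys = "ysof \<tau>" let ?L = "Suc (length ?ys) * l"
  obtain n where n: "\<tau> x = (\<tau> ^^ n) x0" using tx zs_range by auto
  have "(\<tau> ^^ n) x0 = F ?ys n" by (rule t_F)
  also have "\<dots> = F ?ys (n + ?L)" using F_mod[OF good_ysof] by (metis mod_add_self2)
  also have "\<dots> = (\<tau> ^^ (n + ?L)) x0" by (rule t_F[symmetric])
  also have "\<dots> = \<tau> ((\<tau> ^^ (n + ?L - 1)) x0)"
    using Gl_pos[OF good_ysof] by (metis Suc_diff_1 add_gr_0 funpow.simps(2) o_apply)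
  finally have "x = (\<tau> ^^ (n + ?L - 1)) x0" using n permutes_inj[OF tp] by (simp add: inj_eq)
  then show ?thesis using zs_range by auto
qed

lemma tau_cy: "x \<in> set (zs (ysof \<tau>)) \<Longrightarrow> \<tau> x = cy (ysof \<tau>) x"
proof -
  let ?ys = "ysof \<tau>"
  assume "x \<in> set (zs ?ys)"
  then obtain n where x: "x = (\<tau> ^^ n) x0" using zs_range by auto
  then have x': "x = F ?ys n" using t_F by simp
  have "\<tau> x = (\<tau> ^^ Suc n) x0" using x by simp
  also have "\<dots> = F ?ys (Suc n)" by (rule t_F)
  also have "\<dots> = (cy ?ys ^^ 1) (F ?ys n)" using cy_pow[OF good_ysof, of 1 n] by simp
  finally show ?thesis using x' by simp
qed

lemma cyclic_zs: "cyclic_on \<tau> (set (zs (ysof \<tau>)))"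
proof -
  have x0z: "x0 \<in> set (zs (ysof \<tau>))" using zs_range by (metis funpow_0 rangeI)
  have "orbit \<tau> x0 = set (zs (ysof \<tau>))"
  proof -
    have "orbit \<tau> x0 = range (\<lambda>n. (\<tau> ^^ n) x0)"
      unfolding orbit_altdef_permutation[OF tperm] by blast
    then show ?thesis using zs_range by simp
  qed
  then show ?thesis unfolding cyclic_on_def using x0z by blast
qed

lemma tau_decomp: "\<tau> = cy (ysof \<tau>) \<circ> perm_restrict \<tau> (rS (ysof \<tau>))"
proof
  fix x
  let ?ys = "ysof \<tau>"
  have zS: "set (zs ?ys) \<subseteq> S" using zs_sub[OF good_ysof] .
  show "\<tau> x = (cy ?ys \<circ> perm_restrict \<tau> (rS ?ys)) x"
  proof (cases "x \<in> set (zs ?ys)")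
    case True
    then have "x \<notin> rS ?ys" unfolding rS_def by simp
    then show ?thesis using tau_cy[OF True] by (simp add: perm_restrict_def)
  next
    case False
    show ?thesis
    proof (cases "x \<in> S")
      case True
      then have xr: "x \<in> rS ?ys" using False unfolding rS_def by simp
      have "\<tau> x \<notin> set (zs ?ys)" using zs_tau_back True False by blast
      then have "cy ?ys (\<tau> x) = \<tau> x" unfolding cy_def zs_def by (metis id_outside_supp zs_def)
      then show ?thesis using xr by (simp add: perm_restrict_def)
    next
      case nS: False
      then have "\<tau> x = x" using tp permutes_not_in by metis
      moreover have "cy ?ys x = x" using False unfolding cy_def by (rule id_outside_supp)
      moreover have "x \<notin> rS ?ys" using nS unfolding rS_def by simp
      ultimately show ?thesis by (simp add: perm_restrict_def)
    qed
  qed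
qed

lemma restr_root: "perm_restrict \<tau> (rS (ysof \<tau>)) \<in> rts k (r\<sigma> (ysof \<tau>)) (rS (ysof \<tau>))"
proof -
  let ?ys = "ysof \<tau>"
  let ?p = "perm_restrict \<tau> (rS ?ys)"
  have pp: "?p permutes rS ?ys"
    unfolding rS_def by (rule perm_restrict_diff_cyclic[OF tp cyclic_zs])
  have "?p ^^ k = r\<sigma> ?ys"
  proof
    fix x show "(?p ^^ k) x = r\<sigma> ?ys x"
    proof (cases "x \<in> rS ?ys")
      case True
      have inv: "\<And>y. y \<in> rS ?ys \<Longrightarrow> ?p y \<in> rS ?ys" using pp permutes_in_image by metis
      have "(?p ^^ k) x = (\<tau> ^^ k) x"
        using funpow_inv_eq[of "rS ?ys" ?p \<tau> x k] inv True by (simp add: perm_restrict_def)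
      then show ?thesis using True tk by (simp add: r\<sigma>_def)
    next
      case False
      then show ?thesis using permutes_not_in[OF permutes_funpow[OF pp, of k] False] by (simp add: r\<sigma>_def)
    qed
  qed
  then show ?thesis using pp unfolding rts_def by simp
qed

end

end


context rec
begin

lemma rS_sub: "rS ys \<subseteq> S" unfolding rS_def by auto

context
  fixes ys \<tau>' assumes good: "good ys" and R': "\<tau>' \<in> rts k (r\<sigma> ys) (rS ys)"
begin

lemma tp': "\<tau>' permutes rS ys" and tk': "\<tau>' ^^ k = r\<sigma> ys" using R' by (auto simp: rts_def)

lemma gl_perm: "cy ys \<circ> \<tau>' permutes S"
  using permutes_compose[OF permutes_subset[OF tp' rS_sub] permutes_subset[OF cy_permutes[OF good] zs_sub[OF good]]] .

lemma gl_z: "x \<in> set (zs ys) \<Longrightarrow> (cy ys \<circ> \<tau>') x = cy ys x"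
proof -
  assume "x \<in> set (zs ys)"
  then have "x \<notin> rS ys" unfolding rS_def by simp
  then show ?thesis using permutes_not_in[OF tp'] by simp
qed

lemma gl_r: "x \<in> rS ys \<Longrightarrow> (cy ys \<circ> \<tau>') x = \<tau>' x"
proof -
  assume "x \<in> rS ys"
  then have "\<tau>' x \<in> rS ys" using permutes_in_image[OF tp'] by simp
  then have "\<tau>' x \<notin> set (zs ys)" unfolding rS_def by simp
  then show ?thesis unfolding cy_def by (simp add: id_outside_supp)
qed

lemma cy_in: "x \<in> set (zs ys) \<Longrightarrow> cy ys x \<in> set (zs ys)"
  using permutes_in_image[OF cy_permutes[OF good]] by simp

lemma gl_pow_z: "x \<in> set (zs ys) \<Longrightarrow> ((cy ys \<circ> \<tau>') ^^ n) x = (cy ys ^^ n) x"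
  using funpow_inv_eq[of "set (zs ys)" "cy ys \<circ> \<tau>'" "cy ys" x n] gl_z cy_in by simp

lemma gl_pow_r: "x \<in> rS ys \<Longrightarrow> ((cy ys \<circ> \<tau>') ^^ n) x = (\<tau>' ^^ n) x"
  using funpow_inv_eq[of "rS ys" "cy ys \<circ> \<tau>'" "\<tau>'" x n] gl_r permutes_in_image[OF tp'] by simp

lemma gl_root: "cy ys \<circ> \<tau>' \<in> rts k \<sigma> S"
proof -
  have "(cy ys \<circ> \<tau>') ^^ k = \<sigma>"
  proof
    fix x
    show "((cy ys \<circ> \<tau>') ^^ k) x = \<sigma> x"
    proof (cases "x \<in> set (zs ys)")
      case True
      then obtain i where i: "x = F ys i" using set_zs[OF good] by auto
      have "((cy ys \<circ> \<tau>') ^^ k) x = (cy ys ^^ k) (F ys i)" using gl_pow_z[OF True] i by simp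
      also have "\<dots> = F ys (i + k)" by (rule cy_pow[OF good])
      also have "\<dots> = \<sigma> x" using F_k[OF good] i by simp
      finally show ?thesis .
    next
      case False
      show ?thesis
      proof (cases "x \<in> S")
        case True
        then have xr: "x \<in> rS ys" using False unfolding rS_def by simp
        then show ?thesis using gl_pow_r[OF xr] tk' by (simp add: r\<sigma>_def)
      next
        case nS: False
        then show ?thesis using permutes_funpow[OF gl_perm, of k] permutes_not_in out_S by metis
      qed
    qed
  qed
  then show ?thesis using gl_perm unfolding rts_def by simp
qed

lemma F0: "F ys 0 = x0" unfolding F_def by simp

lemma x0_zs: "x0 \<in> set (zs ys)" using set_zs[OF good] F0 by (metis rangeI)

lemma gl_F: "((cy ys \<circ> \<tau>') ^^ n) x0 = F ys n"
  using gl_pow_z[OF x0_zs] cy_pow[OF good, of n 0] F0 by simp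

lemma gl_gof: "gof (cy ys \<circ> \<tau>') = Suc (length ys)"
  unfolding gof_def
proof (rule Least_equality)
  have "F ys (Suc (length ys)) = (\<sigma> ^^ m0 (Suc (length ys))) x0" unfolding F_def by simp
  then have "((cy ys \<circ> \<tau>') ^^ Suc (length ys)) x0 = (\<sigma> ^^ m0 (Suc (length ys))) x0"
    by (simp only: gl_F)
  then show "0 < Suc (length ys) \<and> ((cy ys \<circ> \<tau>') ^^ Suc (length ys)) x0 \<in> C0"
    using pow_in_orbit by (metis zero_less_Suc)
next
  fix y assume y: "0 < y \<and> ((cy ys \<circ> \<tau>') ^^ y) x0 \<in> C0"
  show "Suc (length ys) \<le> y"
  proof (rule ccontr)
    assume "\<not> Suc (length ys) \<le> y"
    then have yl: "y < Suc (length ys)" by simp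
    have "((cy ys \<circ> \<tau>') ^^ y) x0 = F ys y" by (rule gl_F)
    also have "\<dots> = (x0 # ys) ! y" by (rule F_small[OF good yl])
    also have "\<dots> = ys ! (y - 1)" using y by (cases y) auto
    finally have "((cy ys \<circ> \<tau>') ^^ y) x0 = ys ! (y - 1)" .
    moreover have "ys ! (y - 1) \<in> set ys" using yl y by (auto intro!: nth_mem)
    ultimately show False using y ys_Y(2)[OF good] by auto
  qed
qed

lemma gl_ysof: "ysof (cy ys \<circ> \<tau>') = ys"
proof -
  have "length (ysof (cy ys \<circ> \<tau>')) = Suc (length ys) - 1"
    unfolding ysof_def gl_gof by (simp only: length_map length_upt)
  then have len: "length (ysof (cy ys \<circ> \<tau>')) = length ys" by simp
  show ?thesis
  proof (rule nth_equalityI)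
  show "length (ysof (cy ys \<circ> \<tau>')) = length ys" by (rule len)
  fix i assume "i < length (ysof (cy ys \<circ> \<tau>'))"
  then have i: "i < length ys" using len by simp
  have "ysof (cy ys \<circ> \<tau>') ! i = (\<lambda>i. ((cy ys \<circ> \<tau>') ^^ i) x0) ([1..<Suc (length ys)] ! i)"
    unfolding ysof_def gl_gof by (rule nth_map) (use i in simp)
  also have "\<dots> = ((cy ys \<circ> \<tau>') ^^ (Suc i)) x0"
    by (subst nth_upt) (use i in \<open>auto simp del: funpow.simps upt_Suc\<close>)
  also have "\<dots> = F ys (Suc i)" by (rule gl_F)
  also have "\<dots> = ys ! i" using F_small[OF good, of "Suc i"] i by simp
  finally show "ysof (cy ys \<circ> \<tau>') ! i = ys ! i" .
  qed
qed

lemma gl_restr: "perm_restrict (cy ys \<circ> \<tau>') (rS ys) = \<tau>'"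
proof
  fix x show "perm_restrict (cy ys \<circ> \<tau>') (rS ys) x = \<tau>' x"
    using gl_r permutes_not_in[OF tp'] by (cases "x \<in> rS ys") (auto simp: perm_restrict_def)
qed

lemma gl_even: "evenperm (cy ys \<circ> \<tau>') \<longleftrightarrow> (odd (Suc (length ys)) \<longleftrightarrow> evenperm \<tau>')"
proof -
  have p1: "permutation (cy ys)" unfolding cy_def by (rule permutation_of_cycle)
  have "finite (rS ys)" using fin rS_sub finite_subset by blast
  then have p2: "permutation \<tau>'" using tp' permutation_permutes by blast
  show ?thesis using evenperm_comp[OF p1 p2] cy_evenperm[OF good] by simp
qed

end

lemma fiber:
  assumes good: "good ys"
  shows "card {\<tau> \<in> rts k \<sigma> S. ysof \<tau> = ys \<and> evenperm \<tau> = s}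
       = card {\<tau>' \<in> rts k (r\<sigma> ys) (rS ys). evenperm \<tau>' = (odd (Suc (length ys)) = s)}"
proof -
  let ?A = "{\<tau> \<in> rts k \<sigma> S. ysof \<tau> = ys \<and> evenperm \<tau> = s}"
  let ?B = "{\<tau>' \<in> rts k (r\<sigma> ys) (rS ys). evenperm \<tau>' = (odd (Suc (length ys)) = s)}"
  have "?A = (\<lambda>\<tau>'. cy ys \<circ> \<tau>') ` ?B"
  proof
    show "?A \<subseteq> (\<lambda>\<tau>'. cy ys \<circ> \<tau>') ` ?B"
    proof
      fix \<tau> assume t: "\<tau> \<in> ?A"
      then have R: "\<tau> \<in> rts k \<sigma> S" and y: "ysof \<tau> = ys" and e: "evenperm \<tau> = s" by auto
      let ?p = "perm_restrict \<tau> (rS ys)"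
      have pR: "?p \<in> rts k (r\<sigma> ys) (rS ys)" using restr_root[OF R] y by simp
      have d: "\<tau> = cy ys \<circ> ?p" using tau_decomp[OF R] y by simp
      have "evenperm ?p = (odd (Suc (length ys)) = s)"
        using gl_even[OF good pR] d e by auto
      with pR d show "\<tau> \<in> (\<lambda>\<tau>'. cy ys \<circ> \<tau>') ` ?B" by blast
    qed
    show "(\<lambda>\<tau>'. cy ys \<circ> \<tau>') ` ?B \<subseteq> ?A"
    proof
      fix \<tau> assume "\<tau> \<in> (\<lambda>\<tau>'. cy ys \<circ> \<tau>') ` ?B"
      then obtain \<tau>' where t': "\<tau>' \<in> ?B" and t: "\<tau> = cy ys \<circ> \<tau>'" by blast
      then have R': "\<tau>' \<in> rts k (r\<sigma> ys) (rS ys)" by simp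
      show "\<tau> \<in> ?A" using gl_root[OF good R'] gl_ysof[OF good R'] gl_even[OF good R'] t t' by auto
    qed
  qed
  moreover have "inj_on (\<lambda>\<tau>'. cy ys \<circ> \<tau>') ?B"
  proof (rule inj_onI)
    fix a b assume "cy ys \<circ> a = cy ys \<circ> b"
    then show "a = b" using permutes_inj[OF cy_permutes[OF good]] by (auto simp: fun_eq_iff inj_eq)
  qed
  ultimately show ?thesis by (simp add: card_image)
qed

lemma rts_finite: "finite S' \<Longrightarrow> finite (rts k' \<sigma>' S')"
  unfolding rts_def using finite_permutations by (rule finite_subset[rotated]) auto

lemma good_finite: "finite {ys. good ys}"
proof -
  have "{ys. good ys} \<subseteq> {xs. set xs \<subseteq> S \<and> length xs \<le> k}"
  proof
    fix ys assume "ys \<in> {ys. good ys}"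
    then have g: "good ys" by simp
    then have "set ys \<subseteq> S" using ys_Y(2) by blast
    moreover have "Suc (length ys) \<in> {1..k}" using g Gset_sub[OF kpos, of l] unfolding good_def by blast
    then have "Suc (length ys) \<le> k" by simp
    ultimately show "ys \<in> {xs. set xs \<subseteq> S \<and> length xs \<le> k}" by simp
  qed
  then show ?thesis using finite_lists_length_le[OF fin] finite_subset by blast
qed

lemma count_split:
  "card {\<tau> \<in> rts k \<sigma> S. evenperm \<tau> = s}
   = (\<Sum>ys\<in>{ys. good ys}. card {\<tau> \<in> rts k \<sigma> S. ysof \<tau> = ys \<and> evenperm \<tau> = s})"
proof -
  have "{\<tau> \<in> rts k \<sigma> S. evenperm \<tau> = s}
      = (\<Union>ys\<in>{ys. good ys}. {\<tau> \<in> rts k \<sigma> S. ysof \<tau> = ys \<and> evenperm \<tau> = s})"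
    using good_ysof by blast
  moreover have "finite (rts k \<sigma> S)" using rts_finite[OF fin] .
  ultimately show ?thesis
    by (simp only:) (rule card_UN_disjoint[OF good_finite], auto)
qed

lemma Y_distinct: "ys \<in> Ylists n \<Longrightarrow> distinct (map (orbit \<sigma>) (x0 # ys))"
proof -
  assume Y: "ys \<in> Ylists n"
  have "C0 \<notin> orbit \<sigma> ` set ys"
  proof
    assume "C0 \<in> orbit \<sigma> ` set ys"
    then obtain y where "y \<in> set ys" "orbit \<sigma> y = C0" by auto
    then have "y \<in> C0" using orbit_eq_iff by blast
    with \<open>y \<in> set ys\<close> Y show False unfolding Ylists_def by auto
  qed
  then show ?thesis using Y unfolding Ylists_def by simp
qed

end


context rec
begin

definition Uset :: "'a list \<Rightarrow> 'a set" where
  "Uset ys = \<Union> (orbit \<sigma> ` set (x0 # ys))"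

lemma Uset_inv: "set ys \<subseteq> S \<Longrightarrow> inv_set (Uset ys)"
proof -
  assume ys: "set ys \<subseteq> S"
  have "Uset ys \<subseteq> S" unfolding Uset_def using orbit_sub x0 ys by auto
  moreover have "\<sigma> z \<in> Uset ys" if "z \<in> Uset ys" for z
  proof -
    from that obtain y where y: "y \<in> set (x0 # ys)" "z \<in> orbit \<sigma> y" unfolding Uset_def by blast
    then obtain i where "z = (\<sigma> ^^ i) y" using in_orbit_iff by blast
    then have "\<sigma> z = (\<sigma> ^^ Suc i) y" by simp
    then have "\<sigma> z \<in> orbit \<sigma> y" using pow_in_orbit by metis
    with y show ?thesis unfolding Uset_def by blast
  qed
  ultimately show ?thesis unfolding inv_set_def by blast
qed

lemma Y_sub: "ys \<in> Ylists n \<Longrightarrow> set ys \<subseteq> S" unfolding Ylists_def by auto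

lemma Uset_card: "ys \<in> Ylists n \<Longrightarrow> card (Uset ys) = l * Suc n"
proof -
  assume Y: "ys \<in> Ylists n"
  have inv: "inv_set (Uset ys)" using Uset_inv[OF Y_sub[OF Y]] .
  have "orbit \<sigma> ` Uset ys = orbit \<sigma> ` set (x0 # ys)"
  proof
    show "orbit \<sigma> ` Uset ys \<subseteq> orbit \<sigma> ` set (x0 # ys)"
    proof
      fix B assume "B \<in> orbit \<sigma> ` Uset ys"
      then obtain z y where "B = orbit \<sigma> z" "y \<in> set (x0 # ys)" "z \<in> orbit \<sigma> y"
        unfolding Uset_def by blast
      then show "B \<in> orbit \<sigma> ` set (x0 # ys)" using orbit_eq by blast
    qed
    show "orbit \<sigma> ` set (x0 # ys) \<subseteq> orbit \<sigma> ` Uset ys"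
      unfolding Uset_def using self_in_orbit by blast
  qed
  moreover have "card (orbit \<sigma> ` set (x0 # ys)) = Suc n"
    using distinct_card[OF Y_distinct[OF Y]] Y unfolding Ylists_def by simp
  ultimately show ?thesis using card_inv_set[OF inv] by simp
qed

lemma mem_Uset: "x \<in> Uset ys \<longleftrightarrow> x \<in> C0 \<or> (\<exists>y\<in>set ys. orbit \<sigma> x = orbit \<sigma> y)"
  unfolding Uset_def using orbit_eq_iff by auto

lemma Ylists_Suc: "Ylists (Suc n) = (\<Union>ys\<in>Ylists n. (\<lambda>x. x # ys) ` (S - Uset ys))"
proof
  show "Ylists (Suc n) \<subseteq> (\<Union>ys\<in>Ylists n. (\<lambda>x. x # ys) ` (S - Uset ys))"
  proof
    fix xs assume "xs \<in> Ylists (Suc n)"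
    then obtain x ys where xs: "xs = x # ys" and Y: "length ys = n" "x \<in> S - C0" "set ys \<subseteq> S - C0"
      "orbit \<sigma> x \<notin> orbit \<sigma> ` set ys" "distinct (map (orbit \<sigma>) ys)"
      unfolding Ylists_def by (auto simp: length_Suc_conv)
    have "ys \<in> Ylists n" using Y unfolding Ylists_def by simp
    moreover have "x \<in> S - Uset ys" using Y(2,4) mem_Uset by auto
    ultimately show "xs \<in> (\<Union>ys\<in>Ylists n. (\<lambda>x. x # ys) ` (S - Uset ys))" using xs by blast
  qed
  show "(\<Union>ys\<in>Ylists n. (\<lambda>x. x # ys) ` (S - Uset ys)) \<subseteq> Ylists (Suc n)"
  proof
    fix xs assume "xs \<in> (\<Union>ys\<in>Ylists n. (\<lambda>x. x # ys) ` (S - Uset ys))"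
    then obtain ys x where Y: "ys \<in> Ylists n" and x: "x \<in> S - Uset ys" and xs: "xs = x # ys" by blast
    have "x \<notin> C0" "orbit \<sigma> x \<notin> orbit \<sigma> ` set ys" using x mem_Uset by auto
    then show "xs \<in> Ylists (Suc n)" using Y x xs unfolding Ylists_def by auto
  qed
qed

lemma Ylists_finite: "finite (Ylists n)"
proof -
  have "Ylists n \<subseteq> {xs. set xs \<subseteq> S \<and> length xs \<le> n}" unfolding Ylists_def by auto
  then show ?thesis using finite_lists_length_le[OF fin] finite_subset by blast
qed

lemma card_Ylists:
  assumes cS: "card S = l * c"
  shows "card (Ylists n) = Ycnt l c n"
proof (induction n)
  case 0
  have "Ylists 0 = {[]}" unfolding Ylists_def by auto
  then show ?case by (simp add: Ycnt_def)
next
  case (Suc n)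
  have fin_img: "\<forall>ys\<in>Ylists n. finite ((\<lambda>x. x # ys) ` (S - Uset ys))" using fin by blast
  have dis: "\<forall>ys\<in>Ylists n. \<forall>ys'\<in>Ylists n. ys \<noteq> ys' \<longrightarrow>
      (\<lambda>x. x # ys) ` (S - Uset ys) \<inter> (\<lambda>x. x # ys') ` (S - Uset ys') = {}" by blast
  have "card (Ylists (Suc n)) = (\<Sum>ys\<in>Ylists n. card ((\<lambda>x. x # ys) ` (S - Uset ys)))"
    unfolding Ylists_Suc by (rule card_UN_disjoint[OF Ylists_finite fin_img dis])
  also have "\<dots> = (\<Sum>ys\<in>Ylists n. l * (c - Suc n))"
  proof (rule sum.cong[OF refl])
    fix ys assume Y: "ys \<in> Ylists n"
    have "card ((\<lambda>x. x # ys) ` (S - Uset ys)) = card (S - Uset ys)"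
      by (rule card_image) (auto simp: inj_on_def)
    also have "\<dots> = card S - card (Uset ys)"
      using Uset_inv[OF Y_sub[OF Y]] fin by (intro card_Diff_subset) (auto simp: inv_set_def intro: finite_subset)
    also have "\<dots> = l * (c - Suc n)" using cS Uset_card[OF Y] by (simp add: diff_mult_distrib2)
    finally show "card ((\<lambda>x. x # ys) ` (S - Uset ys)) = l * (c - Suc n)" .
  qed
  also have "\<dots> = Ycnt l c n * (l * (c - Suc n))" using Suc by simp
  also have "\<dots> = Ycnt l c (Suc n)" unfolding Ycnt_def by (simp add: algebra_simps)
  finally show ?case .
qed

lemma recurrence:
  assumes cS: "card S = l * c"
    and IH: "\<And>m (\<sigma>' :: 'a \<Rightarrow> 'a) S' s'. m < c \<Longrightarrow> has_cycle_type \<sigma>' S' l m \<Longrightarrow>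
        real (card {\<tau> \<in> rts k \<sigma>' S'. evenperm \<tau> = s'}) = fs s' m"
  shows "real (card {\<tau> \<in> rts k \<sigma> S. evenperm \<tau> = s})
       = (\<Sum>g\<in>Gset k l. real (Ycnt l c (g - 1)) * fs (odd g = s) (c - g))"
proof -
  have "card S > 0" using fin x0 card_gt_0_iff by blast
  then have c0: "c > 0" using cS by simp
  have "real (card {\<tau> \<in> rts k \<sigma> S. evenperm \<tau> = s})
      = (\<Sum>ys\<in>{ys. good ys}. real (card {\<tau> \<in> rts k \<sigma> S. ysof \<tau> = ys \<and> evenperm \<tau> = s}))"
    using count_split by (simp add: of_nat_sum)
  also have "\<dots> = (\<Sum>ys\<in>{ys. good ys}. fs (odd (Suc (length ys)) = s) (c - Suc (length ys)))"
  proof (rule sum.cong[OF refl])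
    fix ys assume "ys \<in> {ys. good ys}"
    then have g: "good ys" by simp
    have "real (card {\<tau> \<in> rts k \<sigma> S. ysof \<tau> = ys \<and> evenperm \<tau> = s})
        = real (card {\<tau>' \<in> rts k (r\<sigma> ys) (rS ys). evenperm \<tau>' = (odd (Suc (length ys)) = s)})"
      using fiber[OF g] by simp
    also have "\<dots> = fs (odd (Suc (length ys)) = s) (c - Suc (length ys))"
      by (rule IH[OF _ rS_type[OF g cS]]) (use c0 in simp)
    finally show "real (card {\<tau> \<in> rts k \<sigma> S. ysof \<tau> = ys \<and> evenperm \<tau> = s})
        = fs (odd (Suc (length ys)) = s) (c - Suc (length ys))" .
  qed
  also have "\<dots> = (\<Sum>g\<in>Gset k l. \<Sum>ys\<in>{ys \<in> {ys. good ys}. Suc (length ys) = g}.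
                     fs (odd (Suc (length ys)) = s) (c - Suc (length ys)))"
    by (rule sum.group[symmetric, OF good_finite Gset_finite[OF kpos]]) (auto simp: good_def)
  also have "\<dots> = (\<Sum>g\<in>Gset k l. real (Ycnt l c (g - 1)) * fs (odd g = s) (c - g))"
  proof (rule sum.cong[OF refl])
    fix g assume g: "g \<in> Gset k l"
    then have g0: "g > 0" using Gset_iff[OF kpos] by blast
    have eq: "{ys \<in> {ys. good ys}. Suc (length ys) = g} = Ylists (g - 1)"
    proof
      show "{ys \<in> {ys. good ys}. Suc (length ys) = g} \<subseteq> Ylists (g - 1)"
        unfolding good_def by auto
      show "Ylists (g - 1) \<subseteq> {ys \<in> {ys. good ys}. Suc (length ys) = g}"
      proof
        fix ys assume Y: "ys \<in> Ylists (g - 1)"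
        then have "length ys = g - 1" unfolding Ylists_def by simp
        then have "Suc (length ys) = g" using g0 by simp
        then show "ys \<in> {ys \<in> {ys. good ys}. Suc (length ys) = g}"
          using Y g \<open>length ys = g - 1\<close> unfolding good_def by simp
      qed
    qed
    have "(\<Sum>ys\<in>{ys \<in> {ys. good ys}. Suc (length ys) = g}. fs (odd (Suc (length ys)) = s) (c - Suc (length ys)))
        = (\<Sum>ys\<in>Ylists (g - 1). fs (odd g = s) (c - g))"
      unfolding eq by (rule sum.cong[OF refl]) (use g0 in \<open>auto simp: Ylists_def\<close>)
    also have "\<dots> = real (card (Ylists (g - 1))) * fs (odd g = s) (c - g)" by simp
    also have "\<dots> = real (Ycnt l c (g - 1)) * fs (odd g = s) (c - g)" using card_Ylists[OF cS] by simp
    finally show "(\<Sum>ys\<in>{ys \<in> {ys. good ys}. Suc (length ys) = g}. fs (odd (Suc (length ys)) = s) (c - Suc (length ys)))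
        = real (Ycnt l c (g - 1)) * fs (odd g = s) (c - g)" .
  qed
  finally show ?thesis .
qed

end


definition PP :: "nat set \<Rightarrow> nat \<Rightarrow> real fps" where
  "PP A l = (\<Sum>g\<in>A. fps_const (real l ^ (g - 1) / real g) * fps_X ^ g)"

lemma PP_nth:
  assumes "finite A"
  shows "fps_nth (PP A l) n = (if n \<in> A then real l ^ (n - 1) / real n else 0)"
proof -
  have "fps_nth (PP A l) n = (\<Sum>g\<in>A. (if n = g then real l ^ (g - 1) / real g else 0))"
    unfolding PP_def fps_sum_nth by (rule sum.cong) (auto simp: fps_X_power_nth)
  also have "\<dots> = (if n \<in> A then real l ^ (n - 1) / real n else 0)"
    using assms by (simp add: sum.delta)
  finally show ?thesis .
qed

lemma PP_0: "finite A \<Longrightarrow> 0 \<notin> A \<Longrightarrow> fps_nth (PP A l) 0 = 0"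
  using PP_nth by simp

lemma dPP_nth:
  assumes "finite A"
  shows "fps_nth (fps_deriv (PP A l)) i = (if Suc i \<in> A then real l ^ i else 0)"
  unfolding fps_deriv_nth PP_nth[OF assms] by (simp del: of_nat_Suc)

lemma fact_Suc_aux: "real (Suc n) * (1 / fact (Suc n)) = 1 / (fact n :: real)"
  by (simp add: fact_Suc del: of_nat_Suc)

lemma deriv_cosh: "fps_deriv (fps_cosh (1::real)) = fps_sinh 1"
proof (rule fps_ext)
  fix n
  show "fps_nth (fps_deriv (fps_cosh (1::real))) n = fps_nth (fps_sinh 1) n"
  proof (cases "odd n")
    case True
    have "fps_nth (fps_deriv (fps_cosh (1::real))) n = real (Suc n) * (1 / fact (Suc n))"
      using True by (simp add: fps_deriv_nth fps_cosh_def del: of_nat_Suc fact_Suc)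
    also have "\<dots> = 1 / fact n" by (rule fact_Suc_aux)
    also have "\<dots> = fps_nth (fps_sinh 1) n" using True by (simp add: fps_sinh_def)
    finally show ?thesis .
  next
    case False
    then show ?thesis by (simp add: fps_deriv_nth fps_cosh_def fps_sinh_def)
  qed
qed

lemma deriv_sinh: "fps_deriv (fps_sinh (1::real)) = fps_cosh 1"
proof (rule fps_ext)
  fix n
  show "fps_nth (fps_deriv (fps_sinh (1::real))) n = fps_nth (fps_cosh 1) n"
  proof (cases "even n")
    case True
    have "fps_nth (fps_deriv (fps_sinh (1::real))) n = real (Suc n) * (1 / fact (Suc n))"
      using True by (simp add: fps_deriv_nth fps_sinh_def del: of_nat_Suc fact_Suc)
    also have "\<dots> = 1 / fact n" by (rule fact_Suc_aux)
    also have "\<dots> = fps_nth (fps_cosh 1) n" using True by (simp add: fps_cosh_def)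
    finally show ?thesis .
  next
    case False
    then show ?thesis by (simp add: fps_deriv_nth fps_sinh_def fps_cosh_def)
  qed
qed

lemma deriv_EO:
  fixes P Q :: "real fps"
  assumes P0: "fps_nth P 0 = 0" and Q0: "fps_nth Q 0 = 0"
  shows "fps_deriv ((fps_exp 1 oo P) * (fps_cosh 1 oo Q))
           = fps_deriv P * ((fps_exp 1 oo P) * (fps_cosh 1 oo Q)) + fps_deriv Q * ((fps_exp 1 oo P) * (fps_sinh 1 oo Q))"
    and "fps_deriv ((fps_exp 1 oo P) * (fps_sinh 1 oo Q))
           = fps_deriv P * ((fps_exp 1 oo P) * (fps_sinh 1 oo Q)) + fps_deriv Q * ((fps_exp 1 oo P) * (fps_cosh 1 oo Q))"
proof -
  have e: "fps_deriv (fps_exp 1 oo P) = (fps_exp 1 oo P) * fps_deriv P"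
    using fps_compose_deriv[OF P0, of "fps_exp 1"] by (simp add: fps_exp_deriv)
  have c: "fps_deriv (fps_cosh 1 oo Q) = (fps_sinh 1 oo Q) * fps_deriv Q"
    using fps_compose_deriv[OF Q0, of "fps_cosh 1"] by (simp add: deriv_cosh)
  have s: "fps_deriv (fps_sinh 1 oo Q) = (fps_cosh 1 oo Q) * fps_deriv Q"
    using fps_compose_deriv[OF Q0, of "fps_sinh 1"] by (simp add: deriv_sinh)
  show "fps_deriv ((fps_exp 1 oo P) * (fps_cosh 1 oo Q))
           = fps_deriv P * ((fps_exp 1 oo P) * (fps_cosh 1 oo Q)) + fps_deriv Q * ((fps_exp 1 oo P) * (fps_sinh 1 oo Q))"
    by (simp add: fps_deriv_mult e c algebra_simps)
  show "fps_deriv ((fps_exp 1 oo P) * (fps_sinh 1 oo Q))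
           = fps_deriv P * ((fps_exp 1 oo P) * (fps_sinh 1 oo Q)) + fps_deriv Q * ((fps_exp 1 oo P) * (fps_cosh 1 oo Q))"
    by (simp add: fps_deriv_mult e s algebra_simps)
qed

lemma coeff_rec:
  fixes X Y D1 D2 :: "real fps"
  assumes "fps_deriv X = D1 * X + D2 * Y"
  shows "real (Suc N) * fps_nth X (Suc N)
         = (\<Sum>i=0..N. fps_nth D1 i * fps_nth X (N - i) + fps_nth D2 i * fps_nth Y (N - i))"
proof -
  have "real (Suc N) * fps_nth X (Suc N) = fps_nth (fps_deriv X) N"
    by (simp add: fps_deriv_nth)
  also have "\<dots> = fps_nth (D1 * X + D2 * Y) N" using assms by simp
  also have "\<dots> = (\<Sum>i=0..N. fps_nth D1 i * fps_nth X (N - i) + fps_nth D2 i * fps_nth Y (N - i))"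
    by (simp add: fps_mult_nth sum.distrib)
  finally show ?thesis .
qed

lemma fact_split: "i \<le> N \<Longrightarrow> fact N = (\<Prod>j<i. N - j) * fact (N - i)"
proof (induction i)
  case 0 then show ?case by simp
next
  case (Suc i)
  then have "fact N = (\<Prod>j<i. N - j) * fact (N - i)" by simp
  also have "fact (N - i) = (N - i) * fact (N - Suc i)"
    using Suc.prems by (metis Suc_diff_Suc fact_Suc le_eq_less_or_eq less_eq_Suc_le not_less_eq_eq of_nat_id)
  finally show ?case by (simp add: algebra_simps)
qed

lemma sum_reindex_G:
  fixes h :: "nat \<Rightarrow> real"
  assumes fG: "finite G" and G0: "0 \<notin> G" and z: "\<And>g. g \<in> G \<Longrightarrow> g > Suc N \<Longrightarrow> h g = 0"
  shows "(\<Sum>g\<in>G. h g) = (\<Sum>i=0..N. if Suc i \<in> G then h (Suc i) else 0)"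
proof -
  have "(\<Sum>i=0..N. if Suc i \<in> G then h (Suc i) else 0) = (\<Sum>i\<in>{i\<in>{0..N}. Suc i \<in> G}. h (Suc i))"
    by (rule sum.inter_filter[symmetric]) simp
  also have "\<dots> = (\<Sum>g\<in>Suc ` {i\<in>{0..N}. Suc i \<in> G}. h g)"
    by (simp add: sum.reindex)
  also have "Suc ` {i\<in>{0..N}. Suc i \<in> G} = G \<inter> {1..Suc N}"
  proof
    show "Suc ` {i \<in> {0..N}. Suc i \<in> G} \<subseteq> G \<inter> {1..Suc N}" by auto
    show "G \<inter> {1..Suc N} \<subseteq> Suc ` {i \<in> {0..N}. Suc i \<in> G}"
    proof
      fix g assume "g \<in> G \<inter> {1..Suc N}"
      then show "g \<in> Suc ` {i \<in> {0..N}. Suc i \<in> G}"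
        by (auto intro!: image_eqI[of _ _ "g - 1"])
    qed
  qed
  also have "(\<Sum>g\<in>G \<inter> {1..Suc N}. h g) = (\<Sum>g\<in>G. h g)"
  proof (rule sum.mono_neutral_left[OF fG])
    show "G \<inter> {1..Suc N} \<subseteq> G" by blast
    show "\<forall>g\<in>G - G \<inter> {1..Suc N}. h g = 0"
    proof
      fix g assume "g \<in> G - G \<inter> {1..Suc N}"
      then have "g \<in> G" "g > Suc N" using G0 by (auto simp: not_le)
      then show "h g = 0" using z by blast
    qed
  qed
  finally show ?thesis by simp
qed

lemma prod_zero_big: "g > Suc N \<Longrightarrow> (\<Prod>j<g - 1. N - j) = (0::nat)"
proof -
  assume "g > Suc N"
  then have "N \<in> {..<g - 1}" by simp
  then show ?thesis by (intro prod_zero) auto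
qed


definition Evf :: "nat \<Rightarrow> nat \<Rightarrow> real fps" where
  "Evf k l = (fps_exp 1 oo PP (GOset k l) l) * (fps_cosh 1 oo PP (GEset k l) l)"

definition Odf :: "nat \<Rightarrow> nat \<Rightarrow> real fps" where
  "Odf k l = (fps_exp 1 oo PP (GOset k l) l) * (fps_sinh 1 oo PP (GEset k l) l)"

lemma GO_fin: "k > 0 \<Longrightarrow> finite (GOset k l)"
  using Gset_finite unfolding GOset_def by auto

lemma GE_fin: "k > 0 \<Longrightarrow> finite (GEset k l)"
  using Gset_finite unfolding GEset_def by auto

lemma GO0: "k > 0 \<Longrightarrow> 0 \<notin> GOset k l"
  using Gset_iff unfolding GOset_def by auto

lemma GE0: "k > 0 \<Longrightarrow> 0 \<notin> GEset k l"
  using Gset_iff unfolding GEset_def by auto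

lemma compose_nth0: "fps_nth (a oo b) 0 = fps_nth a 0"
  by (simp add: fps_compose_nth)

lemma EO_0: "fps_nth (Evf k l) 0 = 1" "fps_nth (Odf k l) 0 = 0"
  unfolding Evf_def Odf_def by (simp_all add: compose_nth0 fps_cosh_def fps_sinh_def)

lemma fps_recur:
  assumes k: "k > 0"
  shows "fact (Suc N) * fps_nth (if s then Evf k l else Odf k l) (Suc N)
     = (\<Sum>g\<in>Gset k l. real (Ycnt l (Suc N) (g - 1)) *
          (fact (Suc N - g) * fps_nth (if odd g = s then Evf k l else Odf k l) (Suc N - g)))"
proof -
  let ?X = "if s then Evf k l else Odf k l" and ?Y = "if s then Odf k l else Evf k l"
  let ?PO = "PP (GOset k l) l" and ?PE = "PP (GEset k l) l"
  define h where "h g = real (Ycnt l (Suc N) (g - 1)) *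
          (fact (Suc N - g) * fps_nth (if odd g = s then Evf k l else Odf k l) (Suc N - g))" for g
  have d: "fps_deriv ?X = fps_deriv ?PO * ?X + fps_deriv ?PE * ?Y"
    using deriv_EO[OF PP_0[OF GO_fin[OF k] GO0[OF k]] PP_0[OF GE_fin[OF k] GE0[OF k]]]
    unfolding Evf_def Odf_def by (cases s) auto
  have r: "real (Suc N) * fps_nth ?X (Suc N) = (\<Sum>i=0..N. fps_nth (fps_deriv ?PO) i * fps_nth ?X (N - i)
            + fps_nth (fps_deriv ?PE) i * fps_nth ?Y (N - i))"
    by (rule coeff_rec[OF d])
  have "fact (Suc N) * fps_nth ?X (Suc N) = fact N * (real (Suc N) * fps_nth ?X (Suc N))"
    by (simp add: fact_Suc del: of_nat_Suc)
  also have "\<dots> = (\<Sum>i=0..N. fact N * (fps_nth (fps_deriv ?PO) i * fps_nth ?X (N - i)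
            + fps_nth (fps_deriv ?PE) i * fps_nth ?Y (N - i)))"
    unfolding r by (simp add: sum_distrib_left)
  also have "\<dots> = (\<Sum>i=0..N. if Suc i \<in> Gset k l then h (Suc i) else 0)"
  proof (rule sum.cong[OF refl])
    fix i assume i: "i \<in> {0..N}"
    have fs: "(fact N :: real) = real (\<Prod>j<i. N - j) * fact (N - i)"
      using fact_split[of i N] i by (metis atLeastAtMost_iff of_nat_fact of_nat_mult)
    have Y: "real (Ycnt l (Suc N) i) = real l ^ i * real (\<Prod>j<i. N - j)"
      unfolding Ycnt_def by simp
    show "fact N * (fps_nth (fps_deriv ?PO) i * fps_nth ?X (N - i) + fps_nth (fps_deriv ?PE) i * fps_nth ?Y (N - i))
        = (if Suc i \<in> Gset k l then h (Suc i) else 0)"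
      unfolding dPP_nth[OF GO_fin[OF k]] dPP_nth[OF GE_fin[OF k]] h_def
      by (cases s; cases "even i") (auto simp: GOset_def GEset_def fs Y)
  qed
  also have "\<dots> = (\<Sum>g\<in>Gset k l. h g)"
  proof (rule sum_reindex_G[symmetric, OF Gset_finite[OF k]])
    show "0 \<notin> Gset k l" using Gset_iff[OF k] by blast
    fix g assume "g \<in> Gset k l" "g > Suc N"
    then have "(\<Prod>j<g - 1. N - j) = 0" using prod_zero_big[of N g] by simp
    then show "h g = 0" unfolding h_def Ycnt_def by simp
  qed
  finally show ?thesis unfolding h_def .
qed

lemma main_count:
  fixes \<sigma> :: "'a \<Rightarrow> 'a"
  assumes k: "k > 0" and lodd: "odd l"
  shows "has_cycle_type \<sigma> S l c \<Longrightarrow>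
    real (card {\<tau> \<in> rts k \<sigma> S. evenperm \<tau> = s}) = fact c * fps_nth (if s then Evf k l else Odf k l) c"
proof (induction c arbitrary: \<sigma> S s rule: less_induct)
  case (less c)
  from less.prems have fin: "finite S" and perm: "\<sigma> permutes S" and cS: "card S = l * c"
    and orb: "\<And>x. x \<in> S \<Longrightarrow> card (orbit \<sigma> x) = l"
    unfolding has_cycle_type_def by auto
  have lpos: "l > 0" using lodd by (cases l) auto
  show ?case
  proof (cases "c = 0")
    case True
    then have S: "S = {}" using fin cS by simp
    then have sid: "\<sigma> = id" using perm by simp
    have "rts k \<sigma> S = {id}" unfolding rts_def S sid by auto
    then have "{\<tau> \<in> rts k \<sigma> S. evenperm \<tau> = s} = (if s then {id} else {})" by auto
    then show ?thesis using True EO_0 by simp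
  next
    case False
    then have "card S > 0" using cS lpos by simp
    then have "S \<noteq> {}" by auto
    then obtain x0 where x0: "x0 \<in> S" by blast
    interpret R: rec \<sigma> S l k x0
      by unfold_locales (use fin perm orb lpos k x0 lodd in auto)
    have IH: "\<And>m (\<sigma>' :: 'a \<Rightarrow> 'a) S' s'. m < c \<Longrightarrow> has_cycle_type \<sigma>' S' l m \<Longrightarrow>
        real (card {\<tau> \<in> rts k \<sigma>' S'. evenperm \<tau> = s'}) = fact m * fps_nth (if s' then Evf k l else Odf k l) m"
      using less.IH by blast
    obtain N where N: "c = Suc N" using False by (cases c) auto
    have "real (card {\<tau> \<in> rts k \<sigma> S. evenperm \<tau> = s})
        = (\<Sum>g\<in>Gset k l. real (Ycnt l c (g - 1)) *
            (fact (c - g) * fps_nth (if odd g = s then Evf k l else Odf k l) (c - g)))"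
      using R.recurrence[OF cS IH] by simp
    also have "\<dots> = fact c * fps_nth (if s then Evf k l else Odf k l) c"
      unfolding N by (rule fps_recur[OF k, symmetric])
    finally show ?thesis .
  qed
qed

lemma egf_eq:
  assumes "\<And>c. real (a c) = fact c * fps_nth E c"
  shows "egf a = E"
proof (rule fps_ext)
  fix c show "fps_nth (egf a) c = fps_nth E c"
    unfolding egf_def using assms[of c] by simp
qed

lemma cycle_type_id:
  assumes "finite T" "card T = c"
  shows "has_cycle_type id T 1 c"
proof -
  have o: "orbit id x = {x}" for x :: 'a
    using orbit_eq_singleton_iff[of id x] by simp
  have "card ((\<lambda>x. orbit id x) ` T) = card ((\<lambda>x. {x}) ` T)" by (simp add: o)
  also have "\<dots> = card T" by (rule card_image) (auto simp: inj_on_def)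
  finally show ?thesis unfolding has_cycle_type_def using assms o by (auto simp: permutes_id)
qed

lemma G1: "Gset k 1 = {g. g dvd k}"
proof
  show "Gset k 1 \<subseteq> {g. g dvd k}"
  proof
    fix g assume "g \<in> Gset k 1"
    then have "gcd g k = g" unfolding Gset_def by simp
    then show "g \<in> {g. g dvd k}" by (metis gcd_dvd2 mem_Collect_eq)
  qed
  show "{g. g dvd k} \<subseteq> Gset k 1"
  proof
    fix g assume "g \<in> {g. g dvd k}"
    then have d: "g dvd k" by simp
    have "gcd g k = g" by (rule dvd_antisym) (use d in \<open>auto intro: gcd_greatest\<close>)
    then show "g \<in> Gset k 1" unfolding Gset_def by simp
  qed
qed


theorem mainTheorem8:
  fixes k l :: nat
    and S :: "nat \<Rightarrow> 'a set" and \<sigma> :: "nat \<Rightarrow> 'a \<Rightarrow> 'a"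
    and T :: "nat \<Rightarrow> 'b set"
  assumes "k > 0" and "even k" and "odd l"
    and "\<And>c. has_cycle_type (\<sigma> c) (S c) l c"
    and "\<And>c. finite (T c) \<and> card (T c) = c"
  shows
   "egf (\<lambda>c. re_roots k (\<sigma> c) (S c)) =
      (fps_exp 1 oo (\<Sum>g\<in>GOset k l. fps_const (real l ^ (g - 1) / real g) * fps_X ^ g)) *
      (fps_cosh 1 oo (\<Sum>g\<in>GEset k l. fps_const (real l ^ (g - 1) / real g) * fps_X ^ g))
    \<and> egf (\<lambda>c. ro_roots k (\<sigma> c) (S c)) =
      (fps_exp 1 oo (\<Sum>g\<in>GOset k l. fps_const (real l ^ (g - 1) / real g) * fps_X ^ g)) *
      (fps_sinh 1 oo (\<Sum>g\<in>GEset k l. fps_const (real l ^ (g - 1) / real g) * fps_X ^ g))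
    \<and> egf (\<lambda>c. re_roots k id (T c)) =
      (fps_exp 1 oo (\<Sum>g\<in>{g. g dvd k \<and> odd g}. fps_const (1 / real g) * fps_X ^ g)) *
      (fps_cosh 1 oo (\<Sum>g\<in>{g. g dvd k \<and> even g}. fps_const (1 / real g) * fps_X ^ g))
    \<and> egf (\<lambda>c. ro_roots k id (T c)) =
      (fps_exp 1 oo (\<Sum>g\<in>{g. g dvd k \<and> odd g}. fps_const (1 / real g) * fps_X ^ g)) *
      (fps_sinh 1 oo (\<Sum>g\<in>{g. g dvd k \<and> even g}. fps_const (1 / real g) * fps_X ^ g))"
proof -
  have k: "k > 0" and l: "odd l" using assms by auto
  have l1: "odd (1::nat)" by simp
  have setE: "card {\<tau> \<in> rts k \<sigma>' S'. evenperm \<tau> = True} = re_roots k \<sigma>' S'" for \<sigma>' :: "'c \<Rightarrow> 'c" and S'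
    unfolding re_roots_def rts_def by (rule arg_cong[where f = card]) auto
  have setO: "card {\<tau> \<in> rts k \<sigma>' S'. evenperm \<tau> = False} = ro_roots k \<sigma>' S'" for \<sigma>' :: "'c \<Rightarrow> 'c" and S'
    unfolding ro_roots_def rts_def by (rule arg_cong[where f = card]) auto
  have T: "has_cycle_type id (T c) 1 c" for c using cycle_type_id assms(5) by blast
  have A: "egf (\<lambda>c. re_roots k (\<sigma> c) (S c)) = Evf k l"
  proof (rule egf_eq)
    fix c show "real (re_roots k (\<sigma> c) (S c)) = fact c * fps_nth (Evf k l) c"
      using main_count[OF k l assms(4), of c True] setE[of "\<sigma> c" "S c"] by simp
  qed
  have B: "egf (\<lambda>c. ro_roots k (\<sigma> c) (S c)) = Odf k l"
  proof (rule egf_eq)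
    fix c show "real (ro_roots k (\<sigma> c) (S c)) = fact c * fps_nth (Odf k l) c"
      using main_count[OF k l assms(4), of c False] setO[of "\<sigma> c" "S c"] by simp
  qed
  have C: "egf (\<lambda>c. re_roots k id (T c)) = Evf k 1"
  proof (rule egf_eq)
    fix c show "real (re_roots k id (T c)) = fact c * fps_nth (Evf k 1) c"
      using main_count[OF k l1 T, of c True] setE[of id "T c"] by simp
  qed
  have D: "egf (\<lambda>c. ro_roots k id (T c)) = Odf k 1"
  proof (rule egf_eq)
    fix c show "real (ro_roots k id (T c)) = fact c * fps_nth (Odf k 1) c"
      using main_count[OF k l1 T, of c False] setO[of id "T c"] by simp
  qed
  have GO1: "GOset k 1 = {g. g dvd k \<and> odd g}" unfolding GOset_def G1 by auto
  have GE1: "GEset k 1 = {g. g dvd k \<and> even g}" unfolding GEset_def G1 by auto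
  show ?thesis
    using A B C D unfolding Evf_def Odf_def PP_def GO1 GE1 by simp
qed


end
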